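(* For a positive integer $d$, a vector $y\in\mathbb{R}^d$ and a positive integer $q$, let $$\mathbf{R}_q(y) = \mathbf{E}\Big(\sum_{i\neq j} y_i y_j r_i r_j\Big)^q,$$ where $r_1,\ldots,r_d$ are independent Rademacher random variables (each $\pm1$ with probability $1/2$) and the sum runs over ordered pairs $(i,j)$, $i\ne j$, in $\{1,\ldots,d\}$. Let $x\in\mathbb{R}^n$ be nonzero, let $K=\|x\|_0$ be its number of nonzero coordinates, and let $$x^* = \Big(\tfrac{\|x\|_2}{\sqrt{K}},\ldots,\tfrac{\|x\|_2}{\sqrt{K}}\Big)\in\mathbb{R}^K.$$ Then for every positive integer $q$, $$\mathbf{R}_q(x)\le \mathbf{R}_q(x^* ),$$ and moreover $$\mathbf{R}_q(x^* ) = \|x\|_2^{2q}\,\mathbf{E}\big(\bar B^2-1\big)^q,$$ where $\bar B = \frac{B-K/2}{\sqrt{K/4}}$ and $B\sim\mathsf{Binom}(K,1/2)$. *)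

theory Defs
  imports "HOL-Probability.Probability"
begin

text \<open>Vectors in R^d are modelled as functions nat => real, only indices 0..d-1 matter.
  Rademacher vector: d independent uniform signs in {-1,1} (Pi_pmf of pmf_of_set).\<close>

definition rademacher_vec :: "nat \<Rightarrow> (nat \<Rightarrow> real) pmf" where
  "rademacher_vec d = Pi_pmf {..<d} 0 (\<lambda>_. pmf_of_set {-1, 1})"

definition R_moment :: "nat \<Rightarrow> (nat \<Rightarrow> real) \<Rightarrow> nat \<Rightarrow> real" where
  "R_moment d y q = measure_pmf.expectation (rademacher_vec d)
     (\<lambda>r. (\<Sum>i<d. \<Sum>j<d. if i \<noteq> j then y i * y j * r i * r j else 0) ^ q)"

definition l2norm :: "nat \<Rightarrow> (nat \<Rightarrow> real) \<Rightarrow> real" where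
  "l2norm n x = sqrt (\<Sum>i<n. (x i)^2)"

definition l0norm :: "nat \<Rightarrow> (nat \<Rightarrow> real) \<Rightarrow> nat" where
  "l0norm n x = card {i. i < n \<and> x i \<noteq> 0}"

end

theory Submission
  imports Defs
begin


primrec Ex :: "real list \<Rightarrow> (real \<Rightarrow> real) \<Rightarrow> real" where
  "Ex [] g = g 0"
| "Ex (y#ys) g = (Ex ys (\<lambda>T. g (T + y)) + Ex ys (\<lambda>T. g (T - y))) / 2"

lemma Ex_add: "Ex ys (\<lambda>T. f T + g T) = Ex ys f + Ex ys g"
  by (induction ys arbitrary: f g) (simp_all add: field_simps)

lemma Ex_cmult: "Ex ys (\<lambda>T. c * f T) = c * Ex ys f"
  by (induction ys arbitrary: f) (simp_all add: field_simps)

lemma Ex_zero_fun: "Ex ys (\<lambda>T. 0) = 0"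
  by (induction ys) simp_all

lemma Ex_sum: "Ex ys (\<lambda>T. \<Sum>i\<in>A. f i T) = (\<Sum>i\<in>A. Ex ys (f i))"
proof (cases "finite A")
  case True
  then show ?thesis
    by (induction A rule: finite_induct) (simp_all add: Ex_zero_fun Ex_add)
qed (simp add: Ex_zero_fun)

lemma Ex_mono: "(\<And>T. f T \<le> g T) \<Longrightarrow> Ex ys f \<le> Ex ys g"
  by (induction ys arbitrary: f g) (simp_all add: add_mono divide_right_mono)

lemma Ex_cong: "(\<And>T. f T = g T) \<Longrightarrow> Ex ys f = Ex ys g"
  by (metis ext)

lemma Ex_swap': "Ex (a#b#ys) g = Ex (b#a#ys) g"
proof -
  have 1: "(\<lambda>T. g (T + b + a)) = (\<lambda>T. g (T + a + b))" "(\<lambda>T. g (T - b + a)) = (\<lambda>T. g (T + a - b))"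
    "(\<lambda>T. g (T + b - a)) = (\<lambda>T. g (T - a + b))" "(\<lambda>T. g (T - b - a)) = (\<lambda>T. g (T - a - b))"
    by (rule ext, simp add: algebra_simps)+
  have 2: "\<And>w x y z::real. ((w+x)/2 + (y+z)/2)/2 = ((w+y)/2+(x+z)/2)/2" by (simp add: field_simps)
  show ?thesis by (simp only: Ex.simps 1) (rule 2)
qed

lemma Ex_move: "Ex (xs @ y # zs) g = Ex (y # xs @ zs) g"
proof (induction xs arbitrary: g)
  case (Cons x xs)
  have "Ex ((x # xs) @ y # zs) g = (Ex (xs @ y # zs) (\<lambda>T. g (T + x)) + Ex (xs @ y # zs) (\<lambda>T. g (T - x))) / 2"
    by simp
  also have "\<dots> = (Ex (y # xs @ zs) (\<lambda>T. g (T + x)) + Ex (y # xs @ zs) (\<lambda>T. g (T - x))) / 2"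
    by (simp only: Cons.IH)
  also have "\<dots> = Ex (x # y # xs @ zs) g" by (simp only: Ex.simps(2))
  also have "\<dots> = Ex (y # x # xs @ zs) g" by (rule Ex_swap')
  finally show ?case by simp
qed simp

lemma Ex_perm: "mset xs = mset ys \<Longrightarrow> Ex xs g = Ex ys g"
proof (induction xs arbitrary: ys g)
  case Nil then show ?case by simp
next
  case (Cons x xs)
  then have "x \<in> set ys" by (metis list.set_intros(1) set_mset_mset)
  then obtain us vs where ys: "ys = us @ x # vs" by (meson split_list)
  with Cons.prems have m: "mset xs = mset (us @ vs)" by simp
  have "Ex ys g = Ex (x # us @ vs) g" using ys Ex_move by simp
  also have "\<dots> = Ex (x # xs) g" using Cons.IH[OF m] by simp
  finally show ?case by simp
qed

lemma Ex_zero: "Ex (0 # ys) g = Ex ys g" by simp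

lemma Ex_neg: "Ex ((-y) # ys) g = Ex (y # ys) g"
proof -
  have "(\<lambda>T. g (T + - y)) = (\<lambda>T. g (T - y))" "(\<lambda>T. g (T - - y)) = (\<lambda>T. g (T + y))" by auto
  then show ?thesis by (simp only: Ex.simps add.commute)
qed

lemma Ex_abs: "Ex (\<bar>y\<bar> # ys) g = Ex (y # ys) g"
  by (cases "y \<ge> 0") (simp_all add: Ex_neg[symmetric])

definition sumsq :: "real list \<Rightarrow> real" where
  "sumsq ys = (\<Sum>y\<leftarrow>ys. y^2)"

lemma sumsq_Cons[simp]: "sumsq (y#ys) = y^2 + sumsq ys" by (simp add: sumsq_def)
lemma sumsq_Nil[simp]: "sumsq [] = 0" by (simp add: sumsq_def)

definition Mo :: "real list \<Rightarrow> nat \<Rightarrow> nat \<Rightarrow> real" where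
  "Mo ys m k = Ex ys (\<lambda>T. T^m * (T^2 - sumsq ys)^k)"

lemma expand1:
  fixes T y c :: real
  shows "(T + y)^m * ((T + y)^2 - (y^2 + c))^k =
    (\<Sum>i\<le>m. \<Sum>l\<le>k. (of_nat (m choose i) * of_nat (k choose l) * (y^i * (2*y)^l)) *
        (T^(m-i+l) * (T^2 - c)^(k-l)))"
proof -
  have e1: "(T + y)^m = (\<Sum>i\<le>m. of_nat (m choose i) * y^i * T^(m-i))"
    using binomial_ring[of y T m] by (simp add: add.commute)
  have e2: "((T + y)^2 - (y^2 + c))^k = (\<Sum>l\<le>k. of_nat (k choose l) * (2*y*T)^l * (T^2-c)^(k-l))"
  proof -
    have "(T + y)^2 - (y^2 + c) = 2*y*T + (T^2 - c)" by (simp add: power2_eq_square algebra_simps)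
    then show ?thesis using binomial_ring[of "2*y*T" "T^2-c" k] by (simp only:)
  qed
  show ?thesis unfolding e1 e2 sum_product
    apply (intro sum.cong refl)
    apply (simp only: power_add power_mult_distrib)
    apply (simp add: ac_simps)
    done
qed

lemma Mo_Cons:
  "Mo (y#ys) m k = (\<Sum>i\<le>m. \<Sum>l\<le>k. (of_nat (m choose i) * of_nat (k choose l) *
      (y^i * (2*y)^l + (-y)^i * (2*(-y))^l)) * Mo ys (m-i+l) (k-l)) / 2"
proof -
  have A: "Ex ys (\<lambda>T. (T + z)^m * ((T + z)^2 - (z^2 + sumsq ys))^k) =
    (\<Sum>i\<le>m. \<Sum>l\<le>k. (of_nat (m choose i) * of_nat (k choose l) * (z^i * (2*z)^l)) * Mo ys (m-i+l) (k-l))" for z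
    unfolding expand1 Ex_sum Ex_cmult Mo_def by simp
  have B: "(T - y) = T + (-y)" for T by simp
  have "Mo (y#ys) m k = (Ex ys (\<lambda>T. (T + y)^m * ((T + y)^2 - (y^2 + sumsq ys))^k)
     + Ex ys (\<lambda>T. (T + (-y))^m * ((T + (-y))^2 - ((-y)^2 + sumsq ys))^k)) / 2"
    unfolding Mo_def by simp
  also have "\<dots> = ((\<Sum>i\<le>m. \<Sum>l\<le>k. (of_nat (m choose i) * of_nat (k choose l) * (y^i * (2*y)^l)) * Mo ys (m-i+l) (k-l))
      + (\<Sum>i\<le>m. \<Sum>l\<le>k. (of_nat (m choose i) * of_nat (k choose l) * ((-y)^i * (2*(-y))^l)) * Mo ys (m-i+l) (k-l))) / 2"
    unfolding A ..
  also have "\<dots> = (\<Sum>i\<le>m. \<Sum>l\<le>k. (of_nat (m choose i) * of_nat (k choose l) *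
      (y^i * (2*y)^l + (-y)^i * (2*(-y))^l)) * Mo ys (m-i+l) (k-l)) / 2"
    by (simp add: sum.distrib[symmetric] algebra_simps)
  finally show ?thesis .
qed



lemma pow_sign_sum_nonneg: "(0::real) \<le> y^i * (2*y)^l + (-y)^i * (2*(-y))^l"
proof -
  have a: "(-y)^i = (-1)^i * y^i" by (rule power_minus)
  have b: "(2*(-y))^l = (-1)^l * (2*y)^l" using power_minus[of "2*y" l] by simp
  have c: "y^i * (2*y)^l = 2^l * y^(i+l)" by (simp add: power_mult_distrib power_add)
  have d0: "(-y)^i * (2*(-y))^l = (-1)^(i+l) * (y^i * (2*y)^l)"
    unfolding a b power_add by (simp only: mult_ac)
  have d: "(-y)^i * (2*(-y))^l = (-1)^(i+l) * (2^l * y^(i+l))"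
    unfolding d0 c ..
  have e: "y^i * (2*y)^l + (-y)^i * (2*(-y))^l = (1 + (-1)^(i+l)) * (2^l * y^(i+l))"
    unfolding c d by (simp only: distrib_right mult_1_left)
  show ?thesis
  proof (cases "even (i+l)")
    case True
    then show ?thesis unfolding e by (simp add: zero_le_even_power)
  next
    case False
    then show ?thesis unfolding e by simp
  qed
qed

lemma Mo_nonneg: "0 \<le> Mo ys m k"
proof (induction ys arbitrary: m k)
  case Nil
  then show ?case by (simp add: Mo_def)
next
  case (Cons y ys)
  show ?case unfolding Mo_Cons
    by (intro divide_nonneg_pos sum_nonneg mult_nonneg_nonneg Cons.IH pow_sign_sum_nonneg) auto
qed



definition cf :: "real \<Rightarrow> real \<Rightarrow> nat \<Rightarrow> nat \<Rightarrow> real" where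
  "cf a b j e = ((2*(a+b))^j + (2*(-(a+b)))^j) * (2*(a*b))^e + ((2*(a-b))^j + (2*(-(a-b)))^j) * (-(2*(a*b)))^e"

lemma pw_mono: fixes u w :: real assumes "0 \<le> u" "u \<le> w" shows "u^n + (-u)^n \<le> w^n + (-w)^n"
proof (cases "even n")
  case True
  then have "(-u)^n = u^n" "(-w)^n = w^n" by (simp_all add: power_minus_even)
  then show ?thesis using power_mono[OF assms(2) assms(1), of n] by simp
next
  case False
  then have "(-u)^n = - (u^n)" "(-w)^n = - (w^n)" by (simp_all add: power_minus_odd)
  then show ?thesis by simp
qed

lemma g_rep: fixes s w :: real
  shows "(s+w)^i*w^e + (s-w)^i*(-w)^e = (\<Sum>l\<le>i. of_nat (i choose l) * s^(i-l) * (w^(l+e) + (-w)^(l+e)))"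
proof -
  have 1: "(s+w)^i = (\<Sum>l\<le>i. of_nat (i choose l) * w^l * s^(i-l))" using binomial_ring[of w s i] by (simp add: add.commute)
  have 2: "(s-w)^i = (\<Sum>l\<le>i. of_nat (i choose l) * (-w)^l * s^(i-l))" using binomial_ring[of "-w" s i] by simp
  show ?thesis unfolding 1 2 sum_distrib_right sum.distrib[symmetric]
    apply (intro sum.cong refl)
    apply (simp only: power_add distrib_left)
    apply (simp add: ac_simps)
    done
qed

lemma g_mono: fixes s u w :: real assumes "0 \<le> s" "0 \<le> u" "u \<le> w"
  shows "(s+u)^i * u^e + (s-u)^i * (-u)^e \<le> (s+w)^i * w^e + (s-w)^i * (-w)^e"
  unfolding g_rep
  by (intro sum_mono mult_left_mono pw_mono assms) (use assms in auto)

lemma evsum: "(x::real)^j + (-x)^j = (if even j then 2 * (x^2)^(j div 2) else 0)"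
proof (cases "even j")
  case True
  then obtain i where "j = 2*i" by auto
  then show ?thesis by (simp add: power_mult power_minus_even)
next
  case False
  then show ?thesis by (simp add: power_minus_odd)
qed

lemma cf_alt: "cf a b j e = (if even j then 2 * 4^(j div 2) *
   ((a^2+b^2 + 2*(a*b))^(j div 2) * (2*(a*b))^e + (a^2+b^2 - 2*(a*b))^(j div 2) * (-(2*(a*b)))^e) else 0)"
proof -
  have m: "2*(-x) = -(2*x)" for x :: real by simp
  have s1: "(2*(a+b))^2 = 4*(a^2+b^2 + 2*(a*b))" "(2*(a-b))^2 = 4*(a^2+b^2 - 2*(a*b))"
    by (simp_all add: power2_eq_square algebra_simps)
  show ?thesis unfolding cf_def m evsum s1 power_mult_distrib[of 4] by (simp add: distrib_left mult_ac)
qed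

lemma cf_mono:
  assumes "a^2+b^2 = a'^2+b'^2" "0 \<le> a*b" "a*b \<le> a'*b'"
  shows "cf a b j e \<le> cf a' b' j e"
proof (cases "even j")
  case True
  have s: "0 \<le> a^2+b^2" by simp
  have "(a^2+b^2 + 2*(a*b))^(j div 2) * (2*(a*b))^e + (a^2+b^2 - 2*(a*b))^(j div 2) * (-(2*(a*b)))^e
     \<le> (a^2+b^2 + 2*(a'*b'))^(j div 2) * (2*(a'*b'))^e + (a^2+b^2 - 2*(a'*b'))^(j div 2) * (-(2*(a'*b')))^e"
    by (rule g_mono[OF s]) (use assms in auto)
  then show ?thesis using True unfolding cf_alt assms(1) by simp
next
  case False
  then show ?thesis unfolding cf_alt by simp
qed

lemma expand2:
  fixes T L s c :: real
  shows "((T + L)^2 - (s + c))^q = (\<Sum>k\<le>q. \<Sum>j\<le>k.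
     (of_nat (q choose k) * of_nat (k choose j) * ((2*L)^j * (L^2 - s)^(k-j))) * (T^j * (T^2 - c)^(q-k)))"
proof -
  have 1: "(T + L)^2 - (s + c) = (2*L*T + (L^2 - s)) + (T^2 - c)"
    by (simp add: power2_eq_square algebra_simps)
  have 2: "(2*L*T + (L^2 - s))^k = (\<Sum>j\<le>k. of_nat (k choose j) * (2*L*T)^j * (L^2-s)^(k-j))" for k
    by (rule binomial_ring)
  show ?thesis unfolding 1 binomial_ring[of "2*L*T + (L^2 - s)"] 2
    apply (intro sum.cong refl)
    apply (simp only: power_mult_distrib sum_distrib_left sum_distrib_right)
    apply (intro sum.cong refl)
    apply (simp add: ac_simps)
    done
qed

lemma Ex_shift:
  "Ex ys (\<lambda>T. ((T + L)^2 - (s + sumsq ys))^q) = (\<Sum>k\<le>q. \<Sum>j\<le>k.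
     (of_nat (q choose k) * of_nat (k choose j) * ((2*L)^j * (L^2 - s)^(k-j))) * Mo ys j (q-k))"
  unfolding expand2 Ex_sum Ex_cmult Mo_def ..

lemma Ex_pair:
  "Ex (a#b#ys) (\<lambda>T. (T^2 - (a^2+b^2+sumsq ys))^q) =
    (\<Sum>k\<le>q. \<Sum>j\<le>k. (of_nat (q choose k) * of_nat (k choose j)) * cf a b j (k-j) * Mo ys j (q-k)) / 4"
proof -
  define s where "s = a^2+b^2"
  define f where "f = (\<lambda>T::real. (T^2 - (s+sumsq ys))^q)"
  have fe: "(\<lambda>T. (T^2 - (a^2+b^2+sumsq ys))^q) = f" unfolding f_def s_def by (simp add: add.assoc)
  have r1: "(\<lambda>T. f (T + b + a)) = (\<lambda>T. ((T + (a+b))^2 - (s + sumsq ys))^q)"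
    unfolding f_def by (rule ext) (simp add: algebra_simps)
  have r2: "(\<lambda>T. f (T - b + a)) = (\<lambda>T. ((T + (a-b))^2 - (s + sumsq ys))^q)"
    unfolding f_def by (rule ext) (simp add: algebra_simps)
  have r3: "(\<lambda>T. f (T + b - a)) = (\<lambda>T. ((T + (-(a-b)))^2 - (s + sumsq ys))^q)"
    unfolding f_def by (rule ext) (simp add: algebra_simps)
  have r4: "(\<lambda>T. f (T - b - a)) = (\<lambda>T. ((T + (-(a+b)))^2 - (s + sumsq ys))^q)"
    unfolding f_def by (rule ext) (simp add: algebra_simps)
  have l1: "(a+b)^2 - s = 2*(a*b)" "(-(a+b))^2 - s = 2*(a*b)"
    "(a-b)^2 - s = -(2*(a*b))" "(-(a-b))^2 - s = -(2*(a*b))"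
    unfolding s_def by (simp_all add: power2_eq_square algebra_simps)
  have "Ex (a#b#ys) f = ((Ex ys (\<lambda>T. f (T + b + a)) + Ex ys (\<lambda>T. f (T - b + a)))/2
       + (Ex ys (\<lambda>T. f (T + b - a)) + Ex ys (\<lambda>T. f (T - b - a)))/2) / 2"
    by simp
  also have "\<dots> = (\<Sum>k\<le>q. \<Sum>j\<le>k. (of_nat (q choose k) * of_nat (k choose j)) * cf a b j (k-j) * Mo ys j (q-k)) / 4"
    unfolding r1 r2 r3 r4 Ex_shift l1
    by (simp add: sum.distrib[symmetric] cf_def algebra_simps add_divide_distrib)
  finally show ?thesis unfolding fe .
qed


lemma pair_mono:
  assumes "a^2+b^2 = a'^2+b'^2" "0 \<le> a*b" "a*b \<le> a'*b'"
  shows "Ex (a#b#ys) (\<lambda>T. (T^2 - (a^2+b^2+sumsq ys))^q) \<le> Ex (a'#b'#ys) (\<lambda>T. (T^2 - (a'^2+b'^2+sumsq ys))^q)"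
  unfolding Ex_pair
  by (intro divide_right_mono sum_mono mult_right_mono mult_left_mono cf_mono Mo_nonneg assms) auto



lemma sumsq_perm: "mset xs = mset ys \<Longrightarrow> sumsq xs = sumsq ys"
  unfolding sumsq_def by (metis mset_map sum_mset_sum_list)

lemma filter_len_perm: "mset xs = mset ys \<Longrightarrow> length (filter P xs) = length (filter P ys)"
  by (metis mset_filter size_mset)

lemma sumsq_nth: "sumsq ys = (\<Sum>i<length ys. (ys!i)^2)"
  unfolding sumsq_def by (simp add: sum_list_sum_nth atLeast0LessThan)

lemma exists_above_below:
  assumes "sumsq ys = real (length ys) * \<mu>" "y0 \<in> set ys" "y0^2 \<noteq> \<mu>"
  shows "\<exists>a\<in>set ys. a^2 > \<mu>" "\<exists>b\<in>set ys. b^2 < \<mu>"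
proof -
  obtain i0 where i0: "i0 < length ys" "ys!i0 = y0" using assms(2) by (metis in_set_conv_nth)
  have L: "(\<Sum>i<length ys. \<mu>) = real (length ys) * \<mu>" by simp
  show "\<exists>a\<in>set ys. a^2 > \<mu>"
  proof (rule ccontr)
    assume "\<not> ?thesis"
    then have le: "\<forall>i\<in>{..<length ys}. (ys!i)^2 \<le> \<mu>" by (auto simp: not_less)
    have "(ys!i0)^2 < \<mu>" using le i0 assms(3) by force
    then have "(\<Sum>i<length ys. (ys!i)^2) < (\<Sum>i<length ys. \<mu>)"
      using le i0 by (intro sum_strict_mono_ex1) auto
    then show False using assms(1) unfolding sumsq_nth L by simp
  qed
  show "\<exists>b\<in>set ys. b^2 < \<mu>"
  proof (rule ccontr)
    assume "\<not> ?thesis"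
    then have le: "\<forall>i\<in>{..<length ys}. \<mu> \<le> (ys!i)^2" by (auto simp: not_less)
    have "\<mu> < (ys!i0)^2" using le i0 assms(3) by force
    then have "(\<Sum>i<length ys. \<mu>) < (\<Sum>i<length ys. (ys!i)^2)"
      using le i0 by (intro sum_strict_mono_ex1) auto
    then show False using assms(1) unfolding sumsq_nth L by simp
  qed
qed

lemma robin_hood:
  fixes C :: real
  assumes "length ys = K" "\<forall>y\<in>set ys. 0 \<le> y" "sumsq ys = C" "K > 0"
  shows "Ex ys (\<lambda>T. (T^2 - C)^q) \<le> Ex (replicate K (sqrt (C / K))) (\<lambda>T. (T^2 - C)^q)"
  using assms
proof (induction "length (filter (\<lambda>y. y^2 \<noteq> C / K) ys)" arbitrary: ys rule: less_induct)
  case less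
  define \<mu> where "\<mu> = C / K"
  have C: "C = real K * \<mu>" unfolding \<mu>_def using less.prems(4) by simp
  show ?case
  proof (cases "\<exists>y\<in>set ys. y^2 \<noteq> \<mu>")
    case False
    have "\<forall>y\<in>set ys. y = sqrt \<mu>"
    proof
      fix y assume y: "y \<in> set ys"
      then have "y^2 = \<mu>" "0 \<le> y" using False less.prems(2) by auto
      then show "y = sqrt \<mu>" by (metis real_sqrt_unique)
    qed
    then have "replicate K (sqrt (C / K)) = ys"
      using less.prems(1) unfolding \<mu>_def by (metis replicate_length_same)
    then show ?thesis by simp
  next
    case True
    then obtain y0 where y0: "y0 \<in> set ys" "y0^2 \<noteq> \<mu>" by auto
    have ss: "sumsq ys = real (length ys) * \<mu>" using C less.prems by simp
    obtain a where a: "a \<in> set ys" "a^2 > \<mu>" using exists_above_below(1)[OF ss y0] by auto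
    obtain us vs where ys: "ys = us @ a # vs" using a(1) by (meson split_list)
    obtain b where b: "b \<in> set ys" "b^2 < \<mu>" using exists_above_below(2)[OF ss y0] by auto
    have "b \<in> set (us @ vs)" using b a ys by auto
    then obtain us' vs' where uv: "us @ vs = us' @ b # vs'" by (meson split_list)
    define rest where "rest = us' @ vs'"
    have m: "mset ys = mset (a # b # rest)" unfolding ys rest_def
      using arg_cong[OF uv, of mset] by simp
    have set_eq: "set ys = set (a # b # rest)" using m by (metis set_mset_mset)
    have a0: "0 \<le> a" "0 \<le> b" "\<forall>y\<in>set rest. 0 \<le> y" using less.prems(2) set_eq by auto
    define a' where "a' = sqrt \<mu>"
    define b' where "b' = sqrt (a^2 + b^2 - \<mu>)"
    have mu0: "0 \<le> \<mu>" using b by (smt (verit) zero_le_power2)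
    have a'sq: "a'^2 = \<mu>" unfolding a'_def using mu0 by simp
    have mle: "\<mu> \<le> a^2 + b^2" using a(2) zero_le_power2[of b] by linarith
    have b'sq: "b'^2 = a^2 + b^2 - \<mu>" unfolding b'_def
    proof -
      have "\<mu> \<le> a^2 + b^2" using a(2) zero_le_power2[of b] by linarith
      then show "(sqrt (a^2 + b^2 - \<mu>))^2 = a^2 + b^2 - \<mu>" by simp
    qed
    have s_eq: "a^2 + b^2 = a'^2 + b'^2" using a'sq b'sq by simp
    have ab0: "0 \<le> a*b" using a0 by simp
    have "(a*b)^2 \<le> (a'*b')^2"
    proof -
      have "(a*b)^2 = a^2 * b^2" by (simp add: power_mult_distrib)
      moreover have "(a'*b')^2 = \<mu> * (a^2 + b^2 - \<mu>)" using a'sq b'sq by (simp add: power_mult_distrib)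
      moreover have "0 \<le> (a^2 - \<mu>) * (\<mu> - b^2)" using a b by simp
      ultimately show ?thesis by (simp add: algebra_simps)
    qed
    moreover have "0 \<le> a'*b'" unfolding a'_def b'_def using mu0 mle by simp
    ultimately have abm: "a*b \<le> a'*b'" by (rule power2_le_imp_le)
    have Cr: "C = a^2 + b^2 + sumsq rest" using less.prems(3) sumsq_perm[OF m] by simp
    have "Ex ys (\<lambda>T. (T^2 - C)^q) = Ex (a # b # rest) (\<lambda>T. (T^2 - C)^q)" using Ex_perm[OF m] .
    also have "\<dots> \<le> Ex (a' # b' # rest) (\<lambda>T. (T^2 - C)^q)"
      using pair_mono[OF s_eq ab0 abm, of rest q] unfolding Cr s_eq .
    also have "\<dots> \<le> Ex (replicate K (sqrt (C / K))) (\<lambda>T. (T^2 - C)^q)"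
    proof (rule less.hyps)
      let ?P = "\<lambda>y. y^2 \<noteq> C / K"
      have "length (filter ?P (a' # b' # rest)) \<le> Suc (length (filter ?P rest))"
        using a'sq unfolding \<mu>_def by simp
      also have "\<dots> < length (filter ?P (a # b # rest))"
        using a b unfolding \<mu>_def by simp
      also have "\<dots> = length (filter ?P ys)" using filter_len_perm[OF m] by simp
      finally show "length (filter ?P (a' # b' # rest)) < length (filter ?P ys)" .
      show "length (a' # b' # rest) = K" 
      proof -
        have "length ys = length (a # b # rest)" using m by (metis size_mset)
        then show ?thesis using less.prems(1) by simp
      qed
      show "\<forall>y\<in>set (a' # b' # rest). 0 \<le> y" using a0 mu0 mle unfolding a'_def b'_def by simp
      show "sumsq (a' # b' # rest) = C" using Cr s_eq by simp
      show "0 < K" by fact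
    qed
    finally show ?thesis .
  qed
qed



lemma finite_set_rad: "finite (set_pmf (Pi_pmf {..<d::nat} (0::real) (\<lambda>_. pmf_of_set {-1, 1::real})))"
proof -
  have "set_pmf (Pi_pmf {..<d} (0::real) (\<lambda>_. pmf_of_set {-1, 1::real})) = PiE_dflt {..<d} 0 (set_pmf \<circ> (\<lambda>_. pmf_of_set {-1, 1::real}))"
    by (rule set_Pi_pmf) simp
  moreover have "finite (PiE_dflt {..<d} (0::real) (set_pmf \<circ> (\<lambda>_. pmf_of_set {-1, 1::real})))"
    by (rule finite_PiE_dflt) auto
  ultimately show ?thesis by simp
qed

lemma exp_rad_Suc:
  fixes h :: "(nat \<Rightarrow> real) \<Rightarrow> real"
  shows "measure_pmf.expectation (Pi_pmf {..<Suc d} 0 (\<lambda>_. pmf_of_set {-1, 1::real})) h =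
    (measure_pmf.expectation (Pi_pmf {..<d} 0 (\<lambda>_. pmf_of_set {-1, 1::real})) (\<lambda>f. h (f(d := 1)))
   + measure_pmf.expectation (Pi_pmf {..<d} 0 (\<lambda>_. pmf_of_set {-1, 1::real})) (\<lambda>f. h (f(d := -1)))) / 2"
proof -
  let ?P = "Pi_pmf {..<d} (0::real) (\<lambda>_. pmf_of_set {-1, 1::real})"
  have ins: "{..<Suc d} = insert d {..<d}" by auto
  have "Pi_pmf {..<Suc d} 0 (\<lambda>_. pmf_of_set {-1, 1::real}) =
        pmf_of_set {-1,1} \<bind> (\<lambda>y. ?P \<bind> (\<lambda>f. return_pmf (f(d := y))))"
    unfolding ins by (subst Pi_pmf_insert') auto
  also have "\<dots> = pmf_of_set {-1,1} \<bind> (\<lambda>y. map_pmf (\<lambda>f. f(d := y)) ?P)"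
    by (simp add: map_pmf_def)
  finally have e: "Pi_pmf {..<Suc d} 0 (\<lambda>_. pmf_of_set {-1, 1::real}) = pmf_of_set {-1,1} \<bind> (\<lambda>y. map_pmf (\<lambda>f. f(d := y)) ?P)" .
  have "measure_pmf.expectation (pmf_of_set {-1,1} \<bind> (\<lambda>y. map_pmf (\<lambda>f. f(d := y)) ?P)) h =
      (\<Sum>a\<in>{-1,1::real}. pmf (pmf_of_set {-1,1}) a *\<^sub>R measure_pmf.expectation (map_pmf (\<lambda>f. f(d := a)) ?P) h)"
    by (rule pmf_expectation_bind) (auto intro: finite_set_rad)
  also have "\<dots> = (measure_pmf.expectation ?P (\<lambda>f. h (f(d := 1))) + measure_pmf.expectation ?P (\<lambda>f. h (f(d := -1)))) / 2"
    by simp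
  finally show ?thesis unfolding e .
qed

lemma exp_rad_Ex:
  fixes g :: "real \<Rightarrow> real \<Rightarrow> real"
  shows "measure_pmf.expectation (rademacher_vec d) (\<lambda>r. g (\<Sum>i<d. y i * r i) (\<Sum>i<d. (y i * r i)^2))
     = Ex (map y [0..<d]) (\<lambda>T. g T (\<Sum>i<d. (y i)^2))"
proof (induction d arbitrary: g)
  case 0
  then show ?case by (simp add: rademacher_vec_def)
next
  case (Suc d)
  let ?P = "Pi_pmf {..<d} (0::real) (\<lambda>_. pmf_of_set {-1, 1::real})"
  have upd: "(\<Sum>i<d. y i * (f(d := v)) i) = (\<Sum>i<d. y i * f i)"
     "(\<Sum>i<d. (y i * (f(d := v)) i)^2) = (\<Sum>i<d. (y i * f i)^2)" for f :: "nat \<Rightarrow> real" and v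
    by (auto intro!: sum.cong)
  have "measure_pmf.expectation (rademacher_vec (Suc d)) (\<lambda>r. g (\<Sum>i<Suc d. y i * r i) (\<Sum>i<Suc d. (y i * r i)^2))
     = (measure_pmf.expectation ?P (\<lambda>f. g ((\<Sum>i<d. y i * f i) + y d) ((\<Sum>i<d. (y i * f i)^2) + (y d)^2))
      + measure_pmf.expectation ?P (\<lambda>f. g ((\<Sum>i<d. y i * f i) + y d * (-1)) ((\<Sum>i<d. (y i * f i)^2) + (y d)^2))) / 2"
    unfolding rademacher_vec_def exp_rad_Suc by (simp add: upd)
  also have "\<dots> = (Ex (map y [0..<d]) (\<lambda>T. g (T + y d) ((\<Sum>i<d. (y i)^2) + (y d)^2))
      + Ex (map y [0..<d]) (\<lambda>T. g (T - y d) ((\<Sum>i<d. (y i)^2) + (y d)^2))) / 2"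
    using Suc.IH[of "\<lambda>T S. g (T + y d) (S + (y d)^2)"] Suc.IH[of "\<lambda>T S. g (T - y d) (S + (y d)^2)"]
    unfolding rademacher_vec_def by simp
  also have "\<dots> = Ex (y d # map y [0..<d]) (\<lambda>T. g T (\<Sum>i<Suc d. (y i)^2))"
    by simp
  also have "\<dots> = Ex (map y [0..<Suc d]) (\<lambda>T. g T (\<Sum>i<Suc d. (y i)^2))"
    by (rule Ex_perm) simp
  finally show ?case .
qed

lemma double_sum:
  fixes y r :: "nat \<Rightarrow> real"
  shows "(\<Sum>i<d. \<Sum>j<d. if i \<noteq> j then y i * y j * r i * r j else 0) = (\<Sum>i<d. y i * r i)^2 - (\<Sum>i<d. (y i * r i)^2)"
proof -
  have "(\<Sum>i<d. y i * r i)^2 = (\<Sum>i<d. \<Sum>j<d. (y i * r i) * (y j * r j))"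
    by (simp add: power2_eq_square sum_product)
  also have "\<dots> = (\<Sum>i<d. (\<Sum>j<d. if i \<noteq> j then y i * y j * r i * r j else 0) + (y i * r i)^2)"
  proof (rule sum.cong[OF refl])
    fix i assume i: "i \<in> {..<d}"
    have "(\<Sum>j<d. (y i * r i) * (y j * r j)) = (\<Sum>j<d. (if i \<noteq> j then y i * y j * r i * r j else 0) + (if j = i then (y i * r i)^2 else 0))"
      by (rule sum.cong) (auto simp: power2_eq_square)
    also have "\<dots> = (\<Sum>j<d. if i \<noteq> j then y i * y j * r i * r j else 0) + (y i * r i)^2"
      using i by (simp add: sum.distrib)
    finally show "(\<Sum>j<d. (y i * r i) * (y j * r j)) = (\<Sum>j<d. if i \<noteq> j then y i * y j * r i * r j else 0) + (y i * r i)^2" .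
  qed
  also have "\<dots> = (\<Sum>i<d. \<Sum>j<d. if i \<noteq> j then y i * y j * r i * r j else 0) + (\<Sum>i<d. (y i * r i)^2)"
    by (simp add: sum.distrib)
  finally show ?thesis by simp
qed

lemma R_moment_Ex: "R_moment d y q = Ex (map y [0..<d]) (\<lambda>T. (T^2 - (\<Sum>i<d. (y i)^2))^q)"
  unfolding R_moment_def double_sum
  using exp_rad_Ex[where g="\<lambda>T S. (T^2 - S)^q" and d=d and y=y] by simp



lemma pascal_sum:
  fixes h :: "nat \<Rightarrow> real"
  shows "(\<Sum>k\<le>Suc K. of_nat (Suc K choose k) * h k) = (\<Sum>k\<le>K. of_nat (K choose k) * h (Suc k)) + (\<Sum>k\<le>K. of_nat (K choose k) * h k)"
proof -
  have 1: "(\<Sum>k\<le>Suc K. of_nat (Suc K choose k) * h k) = h 0 + (\<Sum>k\<le>K. of_nat (Suc K choose Suc k) * h (Suc k))"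
    by (subst sum.atMost_Suc_shift) simp
  have 2: "(\<Sum>k\<le>K. of_nat (Suc K choose Suc k) * h (Suc k)) = (\<Sum>k\<le>K. of_nat (K choose k) * h (Suc k)) + (\<Sum>k\<le>K. of_nat (K choose Suc k) * h (Suc k))"
    by (simp add: sum.distrib algebra_simps)
  have 3: "h 0 + (\<Sum>k\<le>K. of_nat (K choose Suc k) * h (Suc k)) = (\<Sum>k\<le>Suc K. of_nat (K choose k) * h k)"
    by (subst sum.atMost_Suc_shift) simp
  have 4: "(\<Sum>k\<le>Suc K. of_nat (K choose k) * h k) = (\<Sum>k\<le>K. of_nat (K choose k) * h k)" by simp
  show ?thesis using 1 2 3 4 by linarith
qed

lemma Ex_rep: "Ex (replicate K c) g = (\<Sum>k\<le>K. of_nat (K choose k) * g (c * (2 * real k - real K))) / 2^K"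
proof (induction K arbitrary: g)
  case 0
  then show ?case by simp
next
  case (Suc K)
  have e1: "c * (2 * real k - real K) + c = c * (2 * real (Suc k) - real (Suc K))" for k by (simp add: algebra_simps)
  have e2: "c * (2 * real k - real K) - c = c * (2 * real k - real (Suc K))" for k by (simp add: algebra_simps)
  have "Ex (replicate (Suc K) c) g = (Ex (replicate K c) (\<lambda>T. g (T + c)) + Ex (replicate K c) (\<lambda>T. g (T - c))) / 2" by simp
  also have "\<dots> = ((\<Sum>k\<le>K. of_nat (K choose k) * g (c * (2 * real (Suc k) - real (Suc K))))
       + (\<Sum>k\<le>K. of_nat (K choose k) * g (c * (2 * real k - real (Suc K))))) / 2^(Suc K)"
    unfolding Suc.IH e1 e2 by (simp add: add_divide_distrib)
  also have "\<dots> = (\<Sum>k\<le>Suc K. of_nat (Suc K choose k) * g (c * (2 * real k - real (Suc K)))) / 2^(Suc K)"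
    by (subst pascal_sum) simp
  finally show ?case .
qed

lemma exp_binom: fixes f :: "nat \<Rightarrow> real" shows "measure_pmf.expectation (binomial_pmf K (1/2)) f = (\<Sum>k\<le>K. of_nat (K choose k) * f k) / 2^K"
proof -
  have "measure_pmf.expectation (binomial_pmf K (1/2)) f = (\<Sum>k\<le>K. pmf (binomial_pmf K (1/2)) k *\<^sub>R f k)"
    by (subst integral_measure_pmf[of "{..K}"]) auto
  also have "\<dots> = (\<Sum>k\<le>K. of_nat (K choose k) * f k / 2^K)"
  proof (rule sum.cong[OF refl])
    fix k assume "k \<in> {..K}"
    then have "k + (K - k) = K" by simp
    then have "(1/2::real)^k * (1 - 1/2)^(K-k) = 1 / 2^K"
    proof -
      assume kk: "k + (K - k) = K"
      have "(1/2::real)^k * (1 - 1/2)^(K-k) = (1/2)^(k + (K-k))" by (simp add: power_add)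
      also have "\<dots> = 1 / 2^K" using kk by (simp add: power_one_over)
      finally show ?thesis .
    qed
    then show "pmf (binomial_pmf K (1/2)) k *\<^sub>R f k = of_nat (K choose k) * f k / 2^K"
      by (simp add: mult.assoc)
  qed
  finally show ?thesis by (simp add: sum_divide_distrib)
qed

lemma Ex_filter:
  "Ex (map x xs) g = Ex (map (\<lambda>i. \<bar>x i\<bar>) (filter (\<lambda>i. x i \<noteq> 0) xs)) g"
proof (induction xs arbitrary: g)
  case Nil then show ?case by simp
next
  case (Cons a xs)
  show ?case
  proof (cases "x a = 0")
    case True
    then show ?thesis using Cons.IH by simp
  next
    case False
    have "Ex (map x (a # xs)) g = Ex (x a # map (\<lambda>i. \<bar>x i\<bar>) (filter (\<lambda>i. x i \<noteq> 0) xs)) g"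
      using Cons.IH by simp
    also have "\<dots> = Ex (\<bar>x a\<bar> # map (\<lambda>i. \<bar>x i\<bar>) (filter (\<lambda>i. x i \<noteq> 0) xs)) g"
      by (rule Ex_abs[symmetric])
    finally show ?thesis using False by simp
  qed
qed

lemma sumsq_filter:
  "sumsq (map (\<lambda>i. \<bar>x i\<bar>) (filter (\<lambda>i. x i \<noteq> 0) xs)) = (\<Sum>i\<leftarrow>xs. (x i)^2)"
  by (induction xs) auto



theorem theorem3:
  fixes n q :: nat and x :: "nat \<Rightarrow> real"
  assumes "\<exists>i<n. x i \<noteq> 0" and "q > 0"
  shows "R_moment n x q \<le> R_moment (l0norm n x) (\<lambda>_. l2norm n x / sqrt (real (l0norm n x))) q
    \<and> R_moment (l0norm n x) (\<lambda>_. l2norm n x / sqrt (real (l0norm n x))) q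
        = l2norm n x ^ (2*q) * measure_pmf.expectation (binomial_pmf (l0norm n x) (1/2))
            (\<lambda>B. (((real B - real (l0norm n x) / 2) / sqrt (real (l0norm n x) / 4))^2 - 1) ^ q)"
proof -
  define K where "K = l0norm n x"
  define C where "C = (\<Sum>i<n. (x i)^2)"
  define ys where "ys = map (\<lambda>i. \<bar>x i\<bar>) (filter (\<lambda>i. x i \<noteq> 0) [0..<n])"
  have C0: "0 \<le> C" unfolding C_def by (simp add: sum_nonneg)
  have l2: "l2norm n x = sqrt C" unfolding l2norm_def C_def ..
  have l2sq: "(l2norm n x)^2 = C" using C0 l2 by simp
  have lenys: "length ys = K"
  proof -
    have "{i. i < n \<and> x ([0..<n] ! i) \<noteq> 0} = {i. i < n \<and> x i \<noteq> 0}" by auto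
    then show ?thesis unfolding ys_def K_def l0norm_def by (simp add: length_filter_conv_card)
  qed
  have Kpos: "K > 0"
  proof -
    obtain i where "i < n" "x i \<noteq> 0" using assms(1) by auto
    then have "i \<in> {i. i < n \<and> x i \<noteq> 0}" by simp
    then show ?thesis unfolding K_def l0norm_def by (metis card_gt_0_iff empty_iff finite_Collect_conjI finite_Collect_less_nat)
  qed
  have ssys: "sumsq ys = C" unfolding ys_def sumsq_filter C_def
    by (simp add: sum_list_sum_nth atLeast0LessThan)
  have nonneg: "\<forall>y\<in>set ys. 0 \<le> y" unfolding ys_def by auto
  have c_eq: "l2norm n x / sqrt (real K) = sqrt (C / K)" unfolding l2 by (simp add: real_sqrt_divide)
  have R1: "R_moment n x q = Ex ys (\<lambda>T. (T^2 - C)^q)"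
    unfolding R_moment_Ex C_def[symmetric] ys_def by (rule Ex_filter)
  have sumc: "(\<Sum>i<K. (sqrt (C / K))^2) = C" using Kpos C0 by simp
  have R2: "R_moment K (\<lambda>_. l2norm n x / sqrt (real K)) q = Ex (replicate K (sqrt (C / K))) (\<lambda>T. (T^2 - C)^q)"
    unfolding R_moment_Ex c_eq sumc by (simp add: map_replicate_const)
  have part1: "R_moment n x q \<le> R_moment K (\<lambda>_. l2norm n x / sqrt (real K)) q"
    unfolding R1 R2 by (rule robin_hood[OF lenys nonneg ssys Kpos])
  have part2: "Ex (replicate K (sqrt (C / K))) (\<lambda>T. (T^2 - C)^q) =
     l2norm n x ^ (2*q) * measure_pmf.expectation (binomial_pmf K (1/2))
            (\<lambda>B. (((real B - real K / 2) / sqrt (real K / 4))^2 - 1) ^ q)"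
  proof -
    have trm: "((sqrt (C / K) * (2 * real k - real K))^2 - C)^q = C^q * (((real k - real K / 2) / sqrt (real K / 4))^2 - 1) ^ q" for k
    proof -
      have a: "(sqrt (C / K) * (2 * real k - real K))^2 = C / K * (2 * real k - real K)^2"
        using C0 Kpos by (simp add: power_mult_distrib)
      have b: "((real k - real K / 2) / sqrt (real K / 4))^2 = (2 * real k - real K)^2 / K"
        using Kpos by (simp add: power_divide power2_eq_square field_simps)
      have "(sqrt (C / K) * (2 * real k - real K))^2 - C = C * (((real k - real K / 2) / sqrt (real K / 4))^2 - 1)"
        unfolding a b using Kpos by (simp add: field_simps)
      then show ?thesis by (simp add: power_mult_distrib)
    qed
    have "l2norm n x ^ (2*q) = C^q" by (simp add: power_mult l2sq)
    then show ?thesis unfolding Ex_rep exp_binom trm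
      by (simp add: sum_distrib_left sum_divide_distrib algebra_simps)
  qed
  show ?thesis using part1 part2 R2 unfolding K_def by simp
qed

end
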